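(* Let $A\in\mathbb{C}^{m\times n}$. Then the following are equivalent: (1) $A^{\mathfrak{m}}$ exists; (2) $\mathrm{rank}(AA^{\sim})=\mathrm{rank}(A^{\sim})$ and there exist $X\in\mathbb{C}^{m\times m}$ and a projector (idempotent matrix) $Y\in\mathbb{C}^{m\times m}$ such that $XAA^{\sim}-YX=I_m$, $AA^{\sim}X=XAA^{\sim}$ and $AA^{\sim}Y=0$. In this case, for any such $X$, $A^{\mathfrak{m}}=A^{\sim}X$.
   Context: For a positive integer $k$, the Minkowski metric matrix of order $k$ is $G_k=\mathrm{diag}(1,-I_{k-1})$ (with $G_1=(1)$). For $A\in\mathbb{C}^{m\times n}$, the Minkowski adjoint is $A^{\sim}=G_nA^*G_m$, where $A^*$ is the conjugate transpose. The Minkowski inverse of $A$, denoted $A^{\mathfrak{m}}$, is a matrix $Z\in\mathbb{C}^{n\times m}$ with $AZA=A$, $ZAZ=Z$, $(AZ)^{\sim}=AZ$, $(ZA)^{\sim}=ZA$ (unique if it exists). *)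

theory Defs
  imports "Jordan_Normal_Form.Schur_Decomposition" "Jordan_Normal_Form.DL_Rank"
begin

definition minkowski_G :: "nat \<Rightarrow> complex mat" where
  "minkowski_G k = mat k k (\<lambda>(i, j). if i = j then (if i = 0 then 1 else -1) else 0)"

definition minkowski_adj :: "complex mat \<Rightarrow> complex mat" where
  "minkowski_adj A = minkowski_G (dim_col A) * mat_adjoint A * minkowski_G (dim_row A)"

definition is_minkowski_inverse :: "complex mat \<Rightarrow> complex mat \<Rightarrow> bool" where
  "is_minkowski_inverse A Z \<longleftrightarrow>
     Z \<in> carrier_mat (dim_col A) (dim_row A) \<and>
     A * Z * A = A \<and> Z * A * Z = Z \<and>
     minkowski_adj (A * Z) = A * Z \<and> minkowski_adj (Z * A) = Z * A"

end

theory Submission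
  imports Defs
begin

lemma (in vectorspace) subspace_fin_dim_basis:
  assumes W: "VectorSpace.subspace K W V" and fd: "fin_dim"
  shows "\<exists>A. finite A \<and> A \<subseteq> W \<and> vectorspace.basis K (vs W) A"
proof -
  interpret WW: vectorspace K "vs W" using subspace_is_vs[OF W] .
  have WC: "W \<subseteq> carrier V" using W unfolding VectorSpace.subspace_def submodule_def by auto
  have small: "\<And>A. A \<subseteq> carrier (vs W) \<and> WW.lin_indpt A \<Longrightarrow> finite A \<and> card A \<le> dim"
  proof -
    fix A assume a: "A \<subseteq> carrier (vs W) \<and> WW.lin_indpt A"
    have "lin_indpt A" using a W WC span_li_not_depend(2)[of A W] unfolding VectorSpace.subspace_def by auto
    then show "finite A \<and> card A \<le> dim" using li_le_dim[OF fd] a WC by auto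
  qed
  have "\<exists>A. finite A \<and> maximal A (\<lambda>S. S \<subseteq> carrier (vs W) \<and> WW.lin_indpt S)"
    apply (rule maximal_exists[where N = dim and B = "{}"])
    using small apply blast
    by (auto simp: WW.lin_dep_def)
  then obtain A where A: "finite A" "maximal A (\<lambda>S. S \<subseteq> carrier (vs W) \<and> WW.lin_indpt S)" by blast
  have "WW.basis A" by (rule WW.max_li_is_basis[OF A(2)])
  moreover have "A \<subseteq> W" using A(2) unfolding maximal_def by auto
  ultimately show ?thesis using A(1) by blast
qed

lemma (in vectorspace) subspace_dim0:
  assumes W: "VectorSpace.subspace K W V" and fd: "fin_dim" and d: "vectorspace.dim K (vs W) = 0"
  shows "W = {\<zero>\<^bsub>V\<^esub>}"
proof -
  interpret WW: vectorspace K "vs W" using subspace_is_vs[OF W] .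
  obtain A where A: "finite A" "A \<subseteq> W" "WW.basis A" using subspace_fin_dim_basis[OF W fd] by blast
  have "card A = 0" using WW.dim_basis[OF A(1) A(3)] d by simp
  then have "A = {}" using A(1) by simp
  then have "WW.span {} = W" using A(3) unfolding WW.basis_def by simp
  moreover have "WW.span {} = {\<zero>\<^bsub>vs W\<^esub>}" by (rule WW.span_empty)
  ultimately show ?thesis by simp
qed

lemma rank_mult_nullity:
  fixes M N :: "'a::field mat"
  assumes M: "M \<in> carrier_mat nr k" and N: "N \<in> carrier_mat k nc"
  shows "vec_space.rank nr (M*N) + vectorspace.dim class_ring ((module_vec TYPE('a) k)\<lparr>carrier := {v \<in> vec_space.col_space k N. M *\<^sub>v v = 0\<^sub>v nr}\<rparr>) = vec_space.rank k N"
    and "vec_space.rank nr (M*N) = vec_space.rank k N \<Longrightarrow> {v \<in> vec_space.col_space k N. M *\<^sub>v v = 0\<^sub>v nr} = {0\<^sub>v k}"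
proof -
  interpret VK: vec_space "TYPE('a)" k .
  let ?CS = "VK.col_space N"
  have cs: "?CS = VK.span (set (cols N))" unfolding VK.col_space_def ..
  have colsC: "set (cols N) \<subseteq> carrier_vec k" using N cols_dim by blast
  have sub: "VectorSpace.subspace class_ring ?CS VK.V"
    unfolding cs by (rule VK.span_is_subspace) (use colsC in simp)
  have CSC: "?CS \<subseteq> carrier_vec k" using sub unfolding VectorSpace.subspace_def submodule_def by auto
  have vsCS: "vectorspace class_ring (VK.vs ?CS)" by (rule VK.subspace_is_vs[OF sub])
  interpret L: linear_map class_ring "VK.vs ?CS" "module_vec TYPE('a) nr" "\<lambda>v. M *\<^sub>v v"
  proof (intro linear_map.intro)
    show "vectorspace class_ring (VK.vs ?CS)" by (rule vsCS)
    show "vectorspace class_ring (module_vec TYPE('a) nr)" by (rule vec_vs)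
    show "mod_hom class_ring (VK.vs ?CS) (module_vec TYPE('a) nr) (\<lambda>v. M *\<^sub>v v)"
      apply (intro mod_hom.intro)
        apply (rule vectorspace.axioms(1)[OF vsCS])
       apply (rule vectorspace.axioms(1)[OF vec_vs])
      apply (intro mod_hom_axioms.intro)
      unfolding LinearCombinations.module_hom_def Matrix.module_vec_def using M CSC
      by (auto intro!: mult_add_distrib_mat_vec[OF M] mult_mat_vec[OF M] dest: subsetD)
  qed
  have MN: "M * N \<in> carrier_mat nr nc" using M N by simp
  have im: "L.imT = vec_space.col_space nr (M*N)"
  proof -
    have "L.imT = (\<lambda>v. M *\<^sub>v v) ` ?CS"
      unfolding LinearCombinations.mod_hom.im_def[OF L.mod_hom_axioms] by simp
    also have "\<dots> = vec_space.col_space nr (M*N)"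
      unfolding vec_space.col_space_eq[OF MN] VK.col_space_eq[OF N]
    proof (intro equalityI subsetI)
      fix y assume "y \<in> (\<lambda>v. M *\<^sub>v v) ` {y \<in> carrier_vec (dim_row N). \<exists>x\<in>carrier_vec (dim_col N). N *\<^sub>v x = y}"
      then obtain x where x: "x \<in> carrier_vec nc" and y: "y = M *\<^sub>v (N *\<^sub>v x)" using N by auto
      have "y = (M * N) *\<^sub>v x" unfolding y by (rule assoc_mult_mat_vec[symmetric, OF M N x])
      then show "y \<in> {y \<in> carrier_vec (dim_row (M*N)). \<exists>x\<in>carrier_vec (dim_col (M*N)). (M*N) *\<^sub>v x = y}"
        using x M N by auto
    next
      fix y assume "y \<in> {y \<in> carrier_vec (dim_row (M*N)). \<exists>x\<in>carrier_vec (dim_col (M*N)). (M*N) *\<^sub>v x = y}"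
      then obtain x where x: "x \<in> carrier_vec nc" and y: "y = (M*N) *\<^sub>v x" using M N by auto
      have "y = M *\<^sub>v (N *\<^sub>v x)" unfolding y by (rule assoc_mult_mat_vec[OF M N x])
      moreover have "N *\<^sub>v x \<in> {y \<in> carrier_vec (dim_row N). \<exists>x\<in>carrier_vec (dim_col N). N *\<^sub>v x = y}"
        using x N by auto
      ultimately show "y \<in> (\<lambda>v. M *\<^sub>v v) ` {y \<in> carrier_vec (dim_row N). \<exists>x\<in>carrier_vec (dim_col N). N *\<^sub>v x = y}"
        by blast
    qed
    finally show ?thesis .
  qed
  have ker: "L.kerT = {v \<in> ?CS. M *\<^sub>v v = 0\<^sub>v nr}"
    unfolding LinearCombinations.mod_hom.ker_def[OF L.mod_hom_axioms]
    by (auto simp: Matrix.module_vec_def)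
  have fd: "vectorspace.fin_dim class_ring (VK.vs ?CS)"
    unfolding cs by (rule VK.fin_dim_span_cols[OF N])
  have r1: "vec_space.rank nr (M*N) = vectorspace.dim class_ring ((module_vec TYPE('a) nr)\<lparr>carrier := L.imT\<rparr>)"
    using im unfolding vec_space.rank_def vec_space.col_space_def by simp
  have r2: "vec_space.rank k N = vectorspace.dim class_ring (VK.vs ?CS)"
    unfolding vec_space.rank_def cs ..
  have rn: "vectorspace.dim class_ring ((module_vec TYPE('a) nr)\<lparr>carrier := L.imT\<rparr>) + vectorspace.dim class_ring ((VK.vs ?CS)\<lparr>carrier := L.kerT\<rparr>) = vectorspace.dim class_ring (VK.vs ?CS)"
    by (rule L.rank_nullity[OF fd])
  show 1: "vec_space.rank nr (M*N) + vectorspace.dim class_ring ((module_vec TYPE('a) k)\<lparr>carrier := {v \<in> vec_space.col_space k N. M *\<^sub>v v = 0\<^sub>v nr}\<rparr>) = vec_space.rank k N"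
    using rn unfolding r1 r2 ker by simp
  assume eq: "vec_space.rank nr (M*N) = vec_space.rank k N"
  have d0: "vectorspace.dim class_ring ((VK.vs ?CS)\<lparr>carrier := L.kerT\<rparr>) = 0"
    using rn r1 r2 eq by simp
  have "L.kerT = {\<zero>\<^bsub>VK.vs ?CS\<^esub>}"
    by (rule vectorspace.subspace_dim0[OF vsCS L.kerT_is_subspace fd d0])
  then show "{v \<in> vec_space.col_space k N. M *\<^sub>v v = 0\<^sub>v nr} = {0\<^sub>v k}"
    unfolding ker by (simp add: Matrix.module_vec_def)
qed


lemma rank_mult_le:
  fixes M N :: "'a::field mat"
  assumes M: "M \<in> carrier_mat nr k" and N: "N \<in> carrier_mat k nc"
  shows "vec_space.rank nr (M*N) \<le> vec_space.rank k N"
  using rank_mult_nullity(1)[OF M N] by linarith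

lemma rank_cancel:
  fixes M N D :: "'a::field mat"
  assumes M: "M \<in> carrier_mat nr k" and N: "N \<in> carrier_mat k nc" and D: "D \<in> carrier_mat nc p"
    and r: "vec_space.rank nr (M*N) = vec_space.rank k N" and z: "M * N * D = 0\<^sub>m nr p"
  shows "N * D = 0\<^sub>m k p"
proof (rule eq_matI)
  have K: "{v \<in> vec_space.col_space k N. M *\<^sub>v v = 0\<^sub>v nr} = {0\<^sub>v k}" by (rule rank_mult_nullity(2)[OF M N r])
  fix i j assume i: "i < dim_row (0\<^sub>m k p :: 'a mat)" and j: "j < dim_col (0\<^sub>m k p :: 'a mat)"
  then have i: "i < k" and j: "j < p" by auto
  let ?v = "N *\<^sub>v col D j"
  have cD: "col D j \<in> carrier_vec nc" using D j by auto
  have "?v \<in> vec_space.col_space k N"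
    unfolding vec_space.col_space_eq[OF N] using N cD by auto
  moreover have "M *\<^sub>v ?v = 0\<^sub>v nr"
  proof -
    have "M *\<^sub>v ?v = (M * N) *\<^sub>v col D j" using assoc_mult_mat_vec[OF M N cD] by simp
    also have "\<dots> = col (M * N * D) j" using col_mult2[of "M*N" nr nc D p j] M N D j by simp
    also have "\<dots> = 0\<^sub>v nr" unfolding z using j by auto
    finally show ?thesis .
  qed
  ultimately have "?v = 0\<^sub>v k" using K by blast
  moreover have "(N * D) $$ (i,j) = ?v $ i" using N D i j by auto
  ultimately show "(N * D) $$ (i,j) = (0\<^sub>m k p :: 'a mat) $$ (i,j)" using i j by simp
qed (use N D in auto)

definition sg :: "nat \<Rightarrow> complex" where "sg i = (if i = 0 then 1 else -1)"

lemma sg_sq[simp]: "sg i * sg i = 1" by (simp add: sg_def)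
lemma cnj_sg[simp]: "cnj (sg i) = sg i" by (simp add: sg_def)

lemma adj_carrier[simp]: "A \<in> carrier_mat m n \<Longrightarrow> minkowski_adj A \<in> carrier_mat n m"
  unfolding minkowski_adj_def minkowski_G_def mat_adjoint_def by auto

lemma G_carrier[simp]: "minkowski_G k \<in> carrier_mat k k" unfolding minkowski_G_def by simp
lemma G_index: "i < k \<Longrightarrow> l < k \<Longrightarrow> minkowski_G k $$ (i,l) = (if i = l then sg i else 0)"
  unfolding minkowski_G_def sg_def by simp
lemma G_dims[simp]: "dim_row (minkowski_G k) = k" "dim_col (minkowski_G k) = k" unfolding minkowski_G_def by auto

lemma G_mult: assumes "M \<in> carrier_mat k c"
  shows "minkowski_G k * M = mat k c (\<lambda>(i,j). sg i * M $$ (i,j))"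
proof (rule eq_matI)
  fix i j assume i: "i < dim_row (mat k c (\<lambda>(i,j). sg i * M $$ (i,j)))" and j: "j < dim_col (mat k c (\<lambda>(i,j). sg i * M $$ (i,j)))"
  have "(minkowski_G k * M) $$ (i,j) = (\<Sum>l\<in>{0..<k}. minkowski_G k $$ (i,l) * M $$ (l,j))"
    using i j assms by (simp add: carrier_matD scalar_prod_def)
  also have "\<dots> = (\<Sum>l\<in>{0..<k}. if l = i then sg i * M $$ (i,j) else 0)"
    using i j assms by (intro sum.cong) (auto simp: G_index carrier_matD)
  also have "\<dots> = sg i * M $$ (i,j)" using i by simp
  finally show "(minkowski_G k * M) $$ (i,j) = mat k c (\<lambda>(i,j). sg i * M $$ (i,j)) $$ (i,j)" using i j by simp
qed (use assms in auto)

lemma mult_G: assumes "M \<in> carrier_mat r k"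
  shows "M * minkowski_G k = mat r k (\<lambda>(i,j). M $$ (i,j) * sg j)"
proof (rule eq_matI)
  fix i j assume i: "i < dim_row (mat r k (\<lambda>(i,j). M $$ (i,j) * sg j))" and j: "j < dim_col (mat r k (\<lambda>(i,j). M $$ (i,j) * sg j))"
  have "(M * minkowski_G k) $$ (i,j) = (\<Sum>l\<in>{0..<k}. M $$ (i,l) * minkowski_G k $$ (l,j))"
    using i j assms by (simp add: carrier_matD scalar_prod_def)
  also have "\<dots> = (\<Sum>l\<in>{0..<k}. if l = j then M $$ (i,j) * sg j else 0)"
    using i j assms by (intro sum.cong) (auto simp: G_index carrier_matD)
  also have "\<dots> = M $$ (i,j) * sg j" using j by simp
  finally show "(M * minkowski_G k) $$ (i,j) = mat r k (\<lambda>(i,j). M $$ (i,j) * sg j) $$ (i,j)" using i j by simp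
qed (use assms in auto)

lemma adj_explicit: assumes "A \<in> carrier_mat m n"
  shows "minkowski_adj A = mat n m (\<lambda>(i,j). sg i * sg j * cnj (A $$ (j,i)))"
proof -
  have adjc: "mat_adjoint A \<in> carrier_mat n m" using assms unfolding mat_adjoint_def by auto
  have e: "mat_adjoint A = mat n m (\<lambda>(i,j). cnj (A $$ (j,i)))"
    using assms unfolding mat_adjoint_def by (auto simp: mat_of_rows_def)
  have "minkowski_G n * mat_adjoint A = mat n m (\<lambda>(i,j). sg i * cnj (A $$ (j,i)))"
    by (subst G_mult[OF adjc]) (auto simp: e)
  moreover have "mat n m (\<lambda>(i,j). sg i * cnj (A $$ (j,i))) * minkowski_G m = mat n m (\<lambda>(i,j). sg i * sg j * cnj (A $$ (j,i)))"
    by (subst mult_G) auto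
  ultimately show ?thesis unfolding minkowski_adj_def using assms by simp
qed

lemma adj_adj: assumes "A \<in> carrier_mat m n" shows "minkowski_adj (minkowski_adj A) = A"
proof -
  have c: "minkowski_adj A \<in> carrier_mat n m" using assms by simp
  have e: "minkowski_adj A = mat n m (\<lambda>(i,j). sg i * sg j * cnj (A $$ (j,i)))" by (rule adj_explicit[OF assms])
  have c2: "mat n m (\<lambda>(i,j). sg i * sg j * cnj (A $$ (j,i))) \<in> carrier_mat n m" by simp
  show ?thesis unfolding e adj_explicit[OF c2]
    using assms by (intro eq_matI) (auto simp: algebra_simps)
qed

lemma adj_mult: assumes P: "P \<in> carrier_mat a b" and Q: "Q \<in> carrier_mat b c"
  shows "minkowski_adj (P * Q) = minkowski_adj Q * minkowski_adj P"
proof -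
  have PQ: "P * Q \<in> carrier_mat a c" using P Q by simp
  show ?thesis unfolding adj_explicit[OF PQ] adj_explicit[OF P] adj_explicit[OF Q]
  proof (rule eq_matI, goal_cases)
    case (1 i j)
    then have i: "i < c" and j: "j < a" by auto
    have "(mat c b (\<lambda>(i, j). sg i * sg j * cnj (Q $$ (j, i))) * mat b a (\<lambda>(i, j). sg i * sg j * cnj (P $$ (j, i)))) $$ (i,j) = (\<Sum>l\<in>{0..<b}. (sg i * sg l * cnj (Q $$ (l, i))) * (sg l * sg j * cnj (P $$ (j, l))))"
      using i j by (simp add: scalar_prod_def)
    also have "\<dots> = (\<Sum>l\<in>{0..<b}. sg i * sg j * cnj (P $$ (j, l) * Q $$ (l, i)))"
    proof (rule sum.cong)
      fix l
      have "sg i * sg l * cnj (Q $$ (l, i)) * (sg l * sg j * cnj (P $$ (j, l))) = (sg l * sg l) * sg i * sg j * cnj (P $$ (j, l) * Q $$ (l, i))"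
        by (simp add: algebra_simps)
      then show "sg i * sg l * cnj (Q $$ (l, i)) * (sg l * sg j * cnj (P $$ (j, l))) = sg i * sg j * cnj (P $$ (j, l) * Q $$ (l, i))"
        by simp
    qed simp
    also have "\<dots> = sg i * sg j * cnj (\<Sum>l\<in>{0..<b}. P $$ (j, l) * Q $$ (l, i))"
      by (simp add: sum_distrib_left cnj_sum)
    also have "\<dots> = mat c a (\<lambda>(i, j). sg i * sg j * cnj ((P * Q) $$ (j, i))) $$ (i,j)"
      using i j P Q by (simp add: scalar_prod_def)
    finally show ?case ..
  qed auto
qed

lemma adj_minus: assumes P: "P \<in> carrier_mat a b" and Q: "Q \<in> carrier_mat a b"
  shows "minkowski_adj (P - Q) = minkowski_adj P - minkowski_adj Q"
proof -
  have PQ: "P - Q \<in> carrier_mat a b" by (rule minus_carrier_mat[OF Q])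
  show ?thesis unfolding adj_explicit[OF PQ] adj_explicit[OF P] adj_explicit[OF Q]
    using P Q by (intro eq_matI) (auto simp: algebra_simps)
qed

lemma adj_one: "minkowski_adj (1\<^sub>m k) = 1\<^sub>m k"
  unfolding adj_explicit[OF one_carrier_mat] by (intro eq_matI) auto

lemma mat_minus_zero: "(A :: 'a :: ab_group_add mat) \<in> carrier_mat nr nc \<Longrightarrow> A - 0\<^sub>m nr nc = A"
  by (intro eq_matI) auto
lemma mat_minus_self: "(A :: 'a :: ab_group_add mat) \<in> carrier_mat nr nc \<Longrightarrow> A - A = 0\<^sub>m nr nc"
  by (intro eq_matI) auto

lemma square_part:
  fixes P G B :: "complex mat"
  assumes P: "P \<in> carrier_mat m m" and G: "G \<in> carrier_mat m m" and B: "B \<in> carrier_mat m m"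
    and PP: "P * P = P" and BG: "B * G = P" and GB: "G * B = P" and PB: "P * B = B" and BP: "B * P = B"
    and PG: "P * G = G"
  shows "(G - (1\<^sub>m m - P)) * B - (1\<^sub>m m - P) * (G - (1\<^sub>m m - P)) = 1\<^sub>m m"
    and "B * (G - (1\<^sub>m m - P)) = (G - (1\<^sub>m m - P)) * B"
    and "B * (1\<^sub>m m - P) = 0\<^sub>m m m"
    and "(1\<^sub>m m - P) * (1\<^sub>m m - P) = 1\<^sub>m m - P"
proof -
  have I: "1\<^sub>m m \<in> carrier_mat m m" by simp
  have Y: "1\<^sub>m m - P \<in> carrier_mat m m" by (rule minus_carrier_mat[OF P])
  have YB: "(1\<^sub>m m - P) * B = 0\<^sub>m m m"
    unfolding minus_mult_distrib_mat[OF I P B] PB left_mult_one_mat[OF B] by (rule mat_minus_self[OF B])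
  show BY: "B * (1\<^sub>m m - P) = 0\<^sub>m m m"
    unfolding mult_minus_distrib_mat[OF B I P] BP right_mult_one_mat[OF B] by (rule mat_minus_self[OF B])
  have PY: "P * (1\<^sub>m m - P) = 0\<^sub>m m m"
    unfolding mult_minus_distrib_mat[OF P I P] PP right_mult_one_mat[OF P] by (rule mat_minus_self[OF P])
  show YY: "(1\<^sub>m m - P) * (1\<^sub>m m - P) = 1\<^sub>m m - P"
    unfolding minus_mult_distrib_mat[OF I P Y] PY left_mult_one_mat[OF Y] by (rule mat_minus_zero[OF Y])
  have YG: "(1\<^sub>m m - P) * G = 0\<^sub>m m m"
    unfolding minus_mult_distrib_mat[OF I P G] PG left_mult_one_mat[OF G] by (rule mat_minus_self[OF G])
  have XB: "(G - (1\<^sub>m m - P)) * B = P"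
    unfolding minus_mult_distrib_mat[OF G Y B] GB YB by (rule mat_minus_zero[OF P])
  have BX: "B * (G - (1\<^sub>m m - P)) = P"
    unfolding mult_minus_distrib_mat[OF B G Y] BG BY by (rule mat_minus_zero[OF P])
  show "B * (G - (1\<^sub>m m - P)) = (G - (1\<^sub>m m - P)) * B" using XB BX by simp
  have YX: "(1\<^sub>m m - P) * (G - (1\<^sub>m m - P)) = 0\<^sub>m m m - (1\<^sub>m m - P)"
    unfolding mult_minus_distrib_mat[OF Y G Y] YG YY ..
  show "(G - (1\<^sub>m m - P)) * B - (1\<^sub>m m - P) * (G - (1\<^sub>m m - P)) = 1\<^sub>m m"
    unfolding XB YX using P by (intro eq_matI) auto
qed

lemma assoc': "dim_col (A::'a::semiring_0 mat) = dim_row B \<Longrightarrow> dim_col B = dim_row C \<Longrightarrow> A * B * C = A * (B * C)"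
  by (rule assoc_mult_mat[of A "dim_row A" "dim_col A" B "dim_col B" C "dim_col C"]) auto

lemma forward:
  assumes A: "A \<in> carrier_mat m n" and Zi: "is_minkowski_inverse A Z"
  shows "vec_space.rank m (A * minkowski_adj A) = vec_space.rank n (minkowski_adj A)"
    and "\<exists>X Y. X \<in> carrier_mat m m \<and> Y \<in> carrier_mat m m \<and> Y * Y = Y \<and>
                   X * (A * minkowski_adj A) - Y * X = 1\<^sub>m m \<and>
                   (A * minkowski_adj A) * X = X * (A * minkowski_adj A) \<and>
                   (A * minkowski_adj A) * Y = 0\<^sub>m m m"
proof -
  define Ad where "Ad = minkowski_adj A"
  define Zd where "Zd = minkowski_adj Z"
  have Z: "Z \<in> carrier_mat n m" using Zi A unfolding is_minkowski_inverse_def by auto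
  have h1: "A * Z * A = A" and h2: "Z * A * Z = Z" and hAZ: "minkowski_adj (A * Z) = A * Z"
    and hZA: "minkowski_adj (Z * A) = Z * A" using Zi unfolding is_minkowski_inverse_def by auto
  have Ad: "Ad \<in> carrier_mat n m" unfolding Ad_def using A by simp
  have Zd: "Zd \<in> carrier_mat m n" unfolding Zd_def using Z by simp
  have AZ: "A * Z \<in> carrier_mat m m" using A Z by simp
  have ZA: "Z * A \<in> carrier_mat n n" using A Z by simp
  have F1: "Ad * (A * Z) = Ad"
    using adj_mult[OF AZ A] unfolding h1 hAZ Ad_def by simp
  have F2: "Z * A * Ad = Ad"
  proof -
    have "A * (Z * A) = A" using h1 A Z by simp
    then show ?thesis using adj_mult[OF A ZA] unfolding hZA Ad_def by simp
  qed
  have AdZd: "Ad * Zd = Z * A" using adj_mult[OF Z A] unfolding hZA Ad_def Zd_def by simp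
  have ZdAd: "Zd * Ad = A * Z" using adj_mult[OF A Z] unfolding hAZ Ad_def Zd_def by simp
  have AZZd: "A * Z * Zd = Zd"
  proof -
    have "Z * (A * Z) = Z" using h2 A Z by simp
    then show ?thesis using adj_mult[OF Z AZ] unfolding hAZ Zd_def by simp
  qed
  have B: "A * Ad \<in> carrier_mat m m" using A Ad by simp
  have dims: "dim_row A = m" "dim_col A = n" "dim_row Z = n" "dim_col Z = m" "dim_row Ad = n" "dim_col Ad = m"
     "dim_row Zd = m" "dim_col Zd = n" using A Z Ad Zd by auto
  have "Ad = Z * (A * Ad)" using F2 A Z Ad by simp
  then have r1: "vec_space.rank n Ad \<le> vec_space.rank m (A * Ad)"
    using rank_mult_le[OF Z B] by simp
  have r2: "vec_space.rank m (A * Ad) \<le> vec_space.rank n Ad" by (rule rank_mult_le[OF A Ad])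
  show "vec_space.rank m (A * minkowski_adj A) = vec_space.rank n (minkowski_adj A)"
    using r1 r2 unfolding Ad_def by simp
  have G: "Zd * Z \<in> carrier_mat m m" using Zd Z by simp
  have PP: "A * Z * (A * Z) = A * Z"
  proof -
    have "A * Z * (A * Z) = (A * Z * A) * Z" by (rule assoc_mult_mat[OF AZ A Z, symmetric])
    then show ?thesis using h1 by simp
  qed
  have BG: "A * Ad * (Zd * Z) = A * Z"
  proof -
    have "A * Ad * (Zd * Z) = A * (Ad * Zd) * Z" by (simp add: assoc' dims)
    also have "\<dots> = A * Z * A * Z" using AdZd by (simp add: assoc' dims)
    finally show ?thesis using h1 by simp
  qed
  have GB: "Zd * Z * (A * Ad) = A * Z"
  proof -
    have "Zd * Z * (A * Ad) = Zd * (Z * A * Ad)" by (simp add: assoc' dims)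
    then show ?thesis using F2 ZdAd by simp
  qed
  have PB: "A * Z * (A * Ad) = A * Ad"
  proof -
    have "A * Z * (A * Ad) = (A * Z * A) * Ad" by (simp add: assoc' dims)
    then show ?thesis using h1 by simp
  qed
  have BP: "A * Ad * (A * Z) = A * Ad"
  proof -
    have "A * Ad * (A * Z) = A * (Ad * (A * Z))" by (simp add: assoc' dims)
    then show ?thesis using F1 by simp
  qed
  have PG: "A * Z * (Zd * Z) = Zd * Z"
  proof -
    have "A * Z * (Zd * Z) = (A * Z * Zd) * Z" by (simp add: assoc' dims)
    then show ?thesis using AZZd by simp
  qed
  note sq = square_part[OF AZ G B PP BG GB PB BP PG]
  show "\<exists>X Y. X \<in> carrier_mat m m \<and> Y \<in> carrier_mat m m \<and> Y * Y = Y \<and>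
                   X * (A * minkowski_adj A) - Y * X = 1\<^sub>m m \<and>
                   (A * minkowski_adj A) * X = X * (A * minkowski_adj A) \<and>
                   (A * minkowski_adj A) * Y = 0\<^sub>m m m"
    apply (rule exI[of _ "Zd * Z - (1\<^sub>m m - A * Z)"], rule exI[of _ "1\<^sub>m m - A * Z"])
    using sq G AZ unfolding Ad_def by (auto intro: minus_carrier_mat)
qed

lemma backward:
  assumes A: "A \<in> carrier_mat m n"
    and r: "vec_space.rank m (A * minkowski_adj A) = vec_space.rank n (minkowski_adj A)"
    and X: "X \<in> carrier_mat m m" and Y: "Y \<in> carrier_mat m m"
    and e1: "X * (A * minkowski_adj A) - Y * X = 1\<^sub>m m"
    and e2: "(A * minkowski_adj A) * X = X * (A * minkowski_adj A)"
    and e3: "(A * minkowski_adj A) * Y = 0\<^sub>m m m"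
  shows "is_minkowski_inverse A (minkowski_adj A * X)"
proof -
  define Ad where "Ad = minkowski_adj A"
  define B where "B = A * Ad"
  define P where "P = B * X"
  define H where "H = P * X"
  have Ad: "Ad \<in> carrier_mat n m" unfolding Ad_def using A by simp
  have B: "B \<in> carrier_mat m m" unfolding B_def using A Ad by simp
  have P: "P \<in> carrier_mat m m" unfolding P_def using B X by simp
  have H: "H \<in> carrier_mat m m" unfolding H_def using P X by simp
  have dims: "dim_row A = m" "dim_col A = n" "dim_row Ad = n" "dim_col Ad = m" "dim_row B = m" "dim_col B = m"
    "dim_row X = m" "dim_col X = m" "dim_row Y = m" "dim_col Y = m" "dim_row P = m" "dim_col P = m"
    "dim_row H = m" "dim_col H = m"
    using A Ad B X Y P H by auto
  have adjAd: "minkowski_adj Ad = A" unfolding Ad_def by (rule adj_adj[OF A])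
  have adjB: "minkowski_adj B = B" unfolding B_def using adj_mult[OF A Ad] adjAd Ad_def by simp
  have e1': "X * B - Y * X = 1\<^sub>m m" using e1 unfolding B_def Ad_def .
  have e2': "B * X = X * B" using e2 unfolding B_def Ad_def .
  have e3': "B * Y = 0\<^sub>m m m" using e3 unfolding B_def Ad_def .
  have XB: "X * B \<in> carrier_mat m m" using X B by simp
  have YX: "Y * X \<in> carrier_mat m m" using X Y by simp
  have BYX: "B * (Y * X) = 0\<^sub>m m m"
  proof -
    have "B * (Y * X) = B * Y * X" by (simp add: assoc' dims)
    then show ?thesis using e3' X by simp
  qed
  have BXB: "B * (X * B) = B"
  proof -
    have "B * (X * B - Y * X) = B" using e1' B by simp
    then have "B * (X * B) - B * (Y * X) = B" using mult_minus_distrib_mat[OF B XB YX] by simp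
    then show ?thesis using BYX mat_minus_zero[of "B * (X * B)" m m] B X by simp
  qed
  have PX: "P = X * B" unfolding P_def by (rule e2')
  have BP: "B * P = B" unfolding PX by (rule BXB)
  have PB: "P * B = B" unfolding P_def using BXB by (simp add: assoc' dims)
  have PP: "P * P = P"
  proof -
    have "P * P = (B * (X * B)) * X" unfolding P_def by (simp add: assoc' dims)
    then show ?thesis using BXB P_def by simp
  qed
  have AdP: "Ad * P = Ad"
  proof -
    have I: "1\<^sub>m m \<in> carrier_mat m m" by simp
    have PI: "P - 1\<^sub>m m \<in> carrier_mat m m" by (rule minus_carrier_mat[OF I])
    have "A * Ad * (P - 1\<^sub>m m) = B * P - B * 1\<^sub>m m" unfolding B_def[symmetric]
      by (rule mult_minus_distrib_mat[OF B P I])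
    also have "\<dots> = 0\<^sub>m m m" unfolding BP using B by (intro eq_matI) auto
    finally have "A * Ad * (P - 1\<^sub>m m) = 0\<^sub>m m m" .
    then have z: "Ad * (P - 1\<^sub>m m) = 0\<^sub>m n m"
      by (intro rank_cancel[OF A Ad PI]) (use r Ad_def in simp_all)
    have "Ad * (P - 1\<^sub>m m) = Ad * P - Ad" using mult_minus_distrib_mat[OF Ad P I] Ad by simp
    then have d: "Ad * P - Ad = 0\<^sub>m n m" using z by simp
    show ?thesis
    proof (rule eq_matI)
      fix i j assume i: "i < dim_row Ad" and j: "j < dim_col Ad"
      have "(Ad * P - Ad) $$ (i,j) = 0" using d i j Ad by simp
      then show "(Ad * P) $$ (i,j) = Ad $$ (i,j)" using i j Ad P by simp
    qed (use Ad P in auto)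
  qed
  define Xd where "Xd = minkowski_adj X"
  have Xd: "Xd \<in> carrier_mat m m" unfolding Xd_def using X by simp
  have Pd1: "minkowski_adj P = Xd * B" unfolding P_def Xd_def using adj_mult[OF B X] adjB by simp
  have Pd2: "minkowski_adj P = B * Xd" unfolding PX Xd_def using adj_mult[OF X B] adjB by simp
  have PdB: "minkowski_adj P * B = B" using adj_mult[OF B P] adjB BP by simp
  have Pd: "minkowski_adj P = P"
  proof -
    define Q where "Q = minkowski_adj P"
    have Q: "Q \<in> carrier_mat m m" unfolding Q_def using P by simp
    have QB: "Q * B = B" using PdB Q_def by simp
    have "Q * P = Q * (B * X)" unfolding P_def ..
    also have "\<dots> = (Q * B) * X" by (rule assoc_mult_mat[symmetric, OF Q B X])
    finally have 1: "Q * P = P" using QB P_def by simp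
    have "Q * P = (Xd * B) * P" using Pd1 Q_def by simp
    also have "\<dots> = Xd * (B * P)" by (rule assoc_mult_mat[OF Xd B P])
    finally have 2: "Q * P = Q" using BP Pd1 Q_def by simp
    show ?thesis using 1 2 Q_def by simp
  qed
  have PA: "P * A = A" using adj_mult[OF Ad P] AdP adjAd Pd by simp
  have AZ: "A * (Ad * X) = P" unfolding P_def B_def by (simp add: assoc' dims)
  have HB: "H * B = P"
  proof -
    have "H * B = X * (B * (X * B))" unfolding H_def PX by (simp add: assoc' dims)
    then show ?thesis using BXB PX by simp
  qed
  have BH: "B * H = P"
  proof -
    have "B * H = (B * P) * X" unfolding H_def by (simp add: assoc' dims)
    then show ?thesis using BP P_def by simp
  qed
  have PH: "P * H = H"
  proof -
    have "P * H = (P * P) * X" unfolding H_def by (rule assoc_mult_mat[symmetric, OF P P X])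
    then show ?thesis using PP H_def by simp
  qed
  have AdH: "Ad * H = Ad * X"
  proof -
    have "Ad * H = (Ad * P) * X" unfolding H_def by (simp add: assoc' dims)
    then show ?thesis using AdP by simp
  qed
  define Hd where "Hd = minkowski_adj H"
  have Hd: "Hd \<in> carrier_mat m m" unfolding Hd_def using H by simp
  have BHdB: "B * Hd * B = B"
  proof -
    have HBc: "H * B \<in> carrier_mat m m" using H B by simp
    have "minkowski_adj (B * (H * B)) = minkowski_adj (H * B) * B" using adj_mult[OF B HBc] adjB by simp
    also have "\<dots> = B * Hd * B" using adj_mult[OF H B] adjB Hd_def by simp
    finally have "B * Hd * B = minkowski_adj (B * (H * B))" by simp
    also have "B * (H * B) = B" using HB BP by simp
    finally show ?thesis using adjB by simp
  qed
  have PHdP: "P * Hd * P = H"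
  proof -
    have "P * Hd * P = (H * B) * Hd * (B * H)" using HB BH by simp
    also have "\<dots> = H * (B * Hd * B) * H" by (simp add: assoc' dims carrier_matD[OF Hd])
    also have "\<dots> = (H * B) * H" using BHdB by (simp add: assoc' dims carrier_matD[OF Hd])
    finally show ?thesis using HB PH by simp
  qed
  have Zc: "Ad * X \<in> carrier_mat n m" using Ad X by simp
  have AZA: "A * (Ad * X) * A = A" using AZ PA by simp
  have ZAZ: "Ad * X * A * (Ad * X) = Ad * X"
  proof -
    have "Ad * X * A * (Ad * X) = Ad * (X * B * X)" unfolding B_def by (simp add: assoc' dims)
    also have "X * B * X = H" unfolding H_def PX ..
    finally show ?thesis using AdH by simp
  qed
  have adjAZ: "minkowski_adj (A * (Ad * X)) = A * (Ad * X)" using AZ Pd by simp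
  have ZA_eq: "Ad * X * A = Ad * H * A" using AdH by simp
  have adjZA: "minkowski_adj (Ad * X * A) = Ad * X * A"
  proof -
    have AdHc: "Ad * H \<in> carrier_mat n m" using Ad H by simp
    have "minkowski_adj (Ad * H * A) = Ad * (Hd * A)"
      using adj_mult[OF AdHc A] adj_mult[OF Ad H] adjAd Ad_def Hd_def by simp
    also have "\<dots> = (Ad * P) * Hd * (P * A)" using AdP PA by (simp add: assoc' dims carrier_matD[OF Hd])
    also have "\<dots> = Ad * (P * Hd * P) * A" by (simp add: assoc' dims carrier_matD[OF Hd])
    also have "\<dots> = Ad * H * A" using PHdP by simp
    finally show ?thesis using ZA_eq by simp
  qed
  show ?thesis unfolding is_minkowski_inverse_def Ad_def[symmetric]
    using Zc A AZA ZAZ adjAZ adjZA by simp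
qed

theorem theorem6p4:
  fixes A :: "complex mat" and m n :: nat
  assumes "A \<in> carrier_mat m n" and "0 < m" and "0 < n"
  shows "((\<exists>Z. is_minkowski_inverse A Z) \<longleftrightarrow>
           (vec_space.rank m (A * minkowski_adj A) = vec_space.rank n (minkowski_adj A) \<and>
            (\<exists>X Y. X \<in> carrier_mat m m \<and> Y \<in> carrier_mat m m \<and> Y * Y = Y \<and>
                   X * (A * minkowski_adj A) - Y * X = 1\<^sub>m m \<and>
                   (A * minkowski_adj A) * X = X * (A * minkowski_adj A) \<and>
                   (A * minkowski_adj A) * Y = 0\<^sub>m m m)))
       \<and> (\<forall>X Y. (\<exists>Z. is_minkowski_inverse A Z) \<and>
                 X \<in> carrier_mat m m \<and> Y \<in> carrier_mat m m \<and> Y * Y = Y \<and>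
                 X * (A * minkowski_adj A) - Y * X = 1\<^sub>m m \<and>
                 (A * minkowski_adj A) * X = X * (A * minkowski_adj A) \<and>
                 (A * minkowski_adj A) * Y = 0\<^sub>m m m
              \<longrightarrow> is_minkowski_inverse A (minkowski_adj A * X))"
proof -
  note A = assms(1)
  have d1: "\<And>Z. is_minkowski_inverse A Z \<Longrightarrow> vec_space.rank m (A * minkowski_adj A) = vec_space.rank n (minkowski_adj A)"
    using forward(1)[OF A] by blast
  have d2: "\<And>Z. is_minkowski_inverse A Z \<Longrightarrow> (\<exists>X Y. X \<in> carrier_mat m m \<and> Y \<in> carrier_mat m m \<and> Y * Y = Y \<and>
                   X * (A * minkowski_adj A) - Y * X = 1\<^sub>m m \<and>
                   (A * minkowski_adj A) * X = X * (A * minkowski_adj A) \<and>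
                   (A * minkowski_adj A) * Y = 0\<^sub>m m m)"
    using forward(2)[OF A] by blast
  have d3: "\<And>X Y. vec_space.rank m (A * minkowski_adj A) = vec_space.rank n (minkowski_adj A) \<Longrightarrow>
     X \<in> carrier_mat m m \<Longrightarrow> Y \<in> carrier_mat m m \<Longrightarrow>
     X * (A * minkowski_adj A) - Y * X = 1\<^sub>m m \<Longrightarrow>
     (A * minkowski_adj A) * X = X * (A * minkowski_adj A) \<Longrightarrow>
     (A * minkowski_adj A) * Y = 0\<^sub>m m m \<Longrightarrow> is_minkowski_inverse A (minkowski_adj A * X)"
    using backward[OF A] by blast
  show ?thesis
  proof (intro conjI allI impI)
    show "(\<exists>Z. is_minkowski_inverse A Z) \<longleftrightarrow>
           (vec_space.rank m (A * minkowski_adj A) = vec_space.rank n (minkowski_adj A) \<and>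
            (\<exists>X Y. X \<in> carrier_mat m m \<and> Y \<in> carrier_mat m m \<and> Y * Y = Y \<and>
                   X * (A * minkowski_adj A) - Y * X = 1\<^sub>m m \<and>
                   (A * minkowski_adj A) * X = X * (A * minkowski_adj A) \<and>
                   (A * minkowski_adj A) * Y = 0\<^sub>m m m))"
      using d1 d2 d3 by blast
  next
    fix X Y
    assume h: "(\<exists>Z. is_minkowski_inverse A Z) \<and>
                 X \<in> carrier_mat m m \<and> Y \<in> carrier_mat m m \<and> Y * Y = Y \<and>
                 X * (A * minkowski_adj A) - Y * X = 1\<^sub>m m \<and>
                 (A * minkowski_adj A) * X = X * (A * minkowski_adj A) \<and>
                 (A * minkowski_adj A) * Y = 0\<^sub>m m m"
    then show "is_minkowski_inverse A (minkowski_adj A * X)"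
      using d1 d3 by blast
  qed
qed

end
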